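(* Let $F$ be an infinite field, let $n>1$ be an integer, and let $p\in F[x]$ be a nonconstant polynomial. Then every matrix in $\mathrm{M}_n(F)$ can be expressed as a product of two elements of $p[\mathrm{M}_n(F),\mathrm{M}_n(F)]=\{p(AB)-p(BA)\mid A,B\in\mathrm{M}_n(F)\}$. *)

theory Defs
  imports "HOL-Computational_Algebra.Polynomial" "Jordan_Normal_Form.Matrix"
begin

definition mat_poly :: "'a::comm_ring_1 poly \<Rightarrow> 'a mat \<Rightarrow> 'a mat" where
  "mat_poly p A = foldr (\<lambda>c M. c \<cdot>\<^sub>m 1\<^sub>m (dim_row A) + A * M) (coeffs p)
                        (0\<^sub>m (dim_row A) (dim_row A))"

definition poly_commutators :: "'a::comm_ring_1 poly \<Rightarrow> nat \<Rightarrow> 'a mat set" where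
  "poly_commutators p n =
     {mat_poly p (A * B) - mat_poly p (B * A) | A B.
        A \<in> carrier_mat n n \<and> B \<in> carrier_mat n n}"

end

theory Submission
  imports Defs "Jordan_Normal_Form.Determinant"
begin


lemma foldr_carrier:
  assumes "A \<in> carrier_mat n n"
  shows "foldr (\<lambda>c M. c \<cdot>\<^sub>m 1\<^sub>m n + A * M) cs (0\<^sub>m n n) \<in> carrier_mat n n"
  using assms by (induction cs) auto

lemma mat_poly_carrier:
  assumes "A \<in> carrier_mat n n"
  shows "mat_poly p A \<in> carrier_mat n n"
  using foldr_carrier[OF assms] assms unfolding mat_poly_def by simp

lemma foldr_conj:
  fixes A :: "'a::field mat"
  assumes A: "A \<in> carrier_mat n n" and P: "P \<in> carrier_mat n n" and Q: "Q \<in> carrier_mat n n"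
    and PQ: "P * Q = 1\<^sub>m n" and QP: "Q * P = 1\<^sub>m n"
  shows "foldr (\<lambda>c M. c \<cdot>\<^sub>m 1\<^sub>m n + (P * A * Q) * M) cs (0\<^sub>m n n)
       = P * foldr (\<lambda>c M. c \<cdot>\<^sub>m 1\<^sub>m n + A * M) cs (0\<^sub>m n n) * Q"
proof (induction cs)
  case Nil
  then show ?case using P Q by simp
next
  case (Cons c cs)
  define F where "F = foldr (\<lambda>c M. c \<cdot>\<^sub>m 1\<^sub>m n + A * M) cs (0\<^sub>m n n)"
  have F: "F \<in> carrier_mat n n" unfolding F_def by (rule foldr_carrier[OF A])
  have IH: "foldr (\<lambda>c M. c \<cdot>\<^sub>m 1\<^sub>m n + (P * A * Q) * M) cs (0\<^sub>m n n) = P * F * Q"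
    using Cons unfolding F_def .
  have e1: "P * A * Q * (P * F * Q) = P * (A * F) * Q"
  proof -
    have "P * A * Q * (P * F * Q) = P * A * (Q * P) * F * Q"
      using A P Q F by (simp add: assoc_mult_mat[of _ n n _ n _ n])
    also have "\<dots> = P * (A * F) * Q" using A P Q F QP by (simp add: assoc_mult_mat[of _ n n _ n _ n])
    finally show ?thesis .
  qed
  have e2: "P * (c \<cdot>\<^sub>m 1\<^sub>m n) * Q = c \<cdot>\<^sub>m 1\<^sub>m n"
  proof -
    have "P * (c \<cdot>\<^sub>m 1\<^sub>m n) = c \<cdot>\<^sub>m P" using mult_smult_distrib[OF P one_carrier_mat, of c] P by simp
    then show ?thesis using mult_smult_assoc_mat[OF P Q, of c] PQ by simp
  qed
  have "P * (c \<cdot>\<^sub>m 1\<^sub>m n + A * F) * Q = P * (c \<cdot>\<^sub>m 1\<^sub>m n) * Q + P * (A * F) * Q"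
  proof -
    have "P * (c \<cdot>\<^sub>m 1\<^sub>m n + A * F) = P * (c \<cdot>\<^sub>m 1\<^sub>m n) + P * (A * F)"
      by (rule mult_add_distrib_mat[OF P]) (use A F in auto)
    moreover have "(P * (c \<cdot>\<^sub>m 1\<^sub>m n) + P * (A * F)) * Q = P * (c \<cdot>\<^sub>m 1\<^sub>m n) * Q + P * (A * F) * Q"
      by (rule add_mult_distrib_mat[OF _ _ Q]) (use A F P in auto)
    ultimately show ?thesis by simp
  qed
  then show ?case using IH e1 e2 by (simp add: F_def)
qed

lemma mat_poly_conj:
  fixes A :: "'a::field mat"
  assumes A: "A \<in> carrier_mat n n" and P: "P \<in> carrier_mat n n" and Q: "Q \<in> carrier_mat n n"
    and PQ: "P * Q = 1\<^sub>m n" and QP: "Q * P = 1\<^sub>m n"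
  shows "mat_poly p (P * A * Q) = P * mat_poly p A * Q"
  using foldr_conj[OF assms] A P Q unfolding mat_poly_def by simp

lemma foldr_diag:
  fixes u :: "nat \<Rightarrow> 'a::field"
  shows "foldr (\<lambda>c M. c \<cdot>\<^sub>m 1\<^sub>m n + mat_diag n u * M) cs (0\<^sub>m n n)
       = mat_diag n (\<lambda>i. horner_sum (\<lambda>a. a) (u i) cs)"
proof (induction cs)
  case Nil
  then show ?case by (intro eq_matI) (auto simp: mat_diag_def)
next
  case (Cons c cs)
  have "c \<cdot>\<^sub>m 1\<^sub>m n + mat_diag n u * mat_diag n (\<lambda>i. horner_sum (\<lambda>a. a) (u i) cs)
      = mat_diag n (\<lambda>i. c + u i * horner_sum (\<lambda>a. a) (u i) cs)"
    unfolding mat_diag_diag by (intro eq_matI) (auto simp: mat_diag_def)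
  then show ?case using Cons by simp
qed

lemma mat_poly_diag:
  fixes u :: "nat \<Rightarrow> 'a::field"
  shows "mat_poly p (mat_diag n u) = mat_diag n (\<lambda>i. poly p (u i))"
  using foldr_diag[of n u "coeffs p"] unfolding mat_poly_def poly_def
  by (simp add: mat_diag_def id_def)



lemma inv_cancel:
  fixes R :: "'a::field mat"
  assumes "R \<in> carrier_mat n n" "P \<in> carrier_mat n n" "R * P = 1\<^sub>m n" "X \<in> carrier_mat n m"
  shows "R * (P * X) = X"
proof -
  have "R * (P * X) = (R * P) * X" by (rule assoc_mult_mat[symmetric]) (use assms in auto)
  also have "\<dots> = X" using assms by simp
  finally show ?thesis .
qed

lemma conj_mult:
  fixes A :: "'a::field mat"
  assumes A: "A \<in> carrier_mat n n" and B: "B \<in> carrier_mat n n"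
    and P: "P \<in> carrier_mat n n" and R: "R \<in> carrier_mat n n" and RP: "R * P = 1\<^sub>m n"
  shows "(P * A * R) * (P * B * R) = P * (A * B) * R"
proof -
  have "(P * A * R) * (P * B * R) = P * (A * (R * (P * (B * R))))" using assms by (simp add: assoc_mult_mat[of _ n n _ n _ n])
  also have "R * (P * (B * R)) = B * R" using inv_cancel[OF R P RP, of "B * R" n] B R by simp
  finally show ?thesis using assms by (simp add: assoc_mult_mat[of _ n n _ n _ n])
qed

lemma comm_of_sim:
  fixes Q0 :: "'a::field mat"
  assumes Q0: "Q0 \<in> carrier_mat n n" and P: "P \<in> carrier_mat n n" and R: "R \<in> carrier_mat n n"
    and PR: "P * R = 1\<^sub>m n" and RP: "R * P = 1\<^sub>m n"
  shows "mat_poly p Q0 - P * mat_poly p Q0 * R \<in> poly_commutators p n"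
proof -
  have AB: "R * (P * Q0) = Q0" using inv_cancel[OF R P RP Q0] .
  have BA: "P * Q0 * R = (P * Q0) * R" by simp
  have "mat_poly p (P * Q0 * R) = P * mat_poly p Q0 * R" by (rule mat_poly_conj[OF Q0 P R PR RP])
  then have "mat_poly p Q0 - P * mat_poly p Q0 * R = mat_poly p (R * (P * Q0)) - mat_poly p ((P * Q0) * R)"
    using AB by simp
  moreover have "R \<in> carrier_mat n n" "P * Q0 \<in> carrier_mat n n" using R P Q0 by auto
  ultimately show ?thesis unfolding poly_commutators_def by blast
qed

lemma comm_conj:
  fixes X :: "'a::field mat"
  assumes X: "X \<in> poly_commutators p n" and P: "P \<in> carrier_mat n n" and R: "R \<in> carrier_mat n n"
    and PR: "P * R = 1\<^sub>m n" and RP: "R * P = 1\<^sub>m n"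
  shows "P * X * R \<in> poly_commutators p n"
proof -
  obtain A B where A: "A \<in> carrier_mat n n" and B: "B \<in> carrier_mat n n"
    and Xe: "X = mat_poly p (A * B) - mat_poly p (B * A)"
    using X unfolding poly_commutators_def by blast
  have c1: "mat_poly p (A * B) \<in> carrier_mat n n" "mat_poly p (B * A) \<in> carrier_mat n n"
    using A B by (auto intro: mat_poly_carrier)
  have "P * X * R = P * mat_poly p (A * B) * R - P * mat_poly p (B * A) * R"
  proof -
    have "P * X = P * mat_poly p (A * B) - P * mat_poly p (B * A)"
      unfolding Xe by (rule mult_minus_distrib_mat[OF P c1])
    then have "P * X * R = (P * mat_poly p (A * B) - P * mat_poly p (B * A)) * R" by simp
    also have "\<dots> = P * mat_poly p (A * B) * R - P * mat_poly p (B * A) * R"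
      by (rule minus_mult_distrib_mat[OF _ _ R]) (use P c1 in auto)
    finally show ?thesis .
  qed
  also have "\<dots> = mat_poly p ((P * A * R) * (P * B * R)) - mat_poly p ((P * B * R) * (P * A * R))"
    using conj_mult[OF A B P R RP] conj_mult[OF B A P R RP]
      mat_poly_conj[OF _ P R PR RP, of "A * B"] mat_poly_conj[OF _ P R PR RP, of "B * A"] A B by simp
  finally have "P * X * R = mat_poly p ((P * A * R) * (P * B * R)) - mat_poly p ((P * B * R) * (P * A * R))" .
  moreover have "P * A * R \<in> carrier_mat n n" "P * B * R \<in> carrier_mat n n" using P A B R by auto
  ultimately show ?thesis unfolding poly_commutators_def by blast
qed



function ev :: "'a::field mat \<Rightarrow> nat \<Rightarrow> nat \<Rightarrow> 'a" where
  "ev T j i = (if j < i then 0 else if i = j then 1 else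
      - (\<Sum>k\<in>{i<..j}. T $$ (i,k) * ev T j k) / (T $$ (i,i) - T $$ (j,j)))"
  by pat_completeness auto
termination by (relation "measure (\<lambda>(T,j,i). j - i)") auto

declare ev.simps[simp del]

lemma ev_gt: "j < i \<Longrightarrow> ev T j i = 0" by (subst ev.simps) simp
lemma ev_eq: "ev T j j = 1" by (subst ev.simps) simp
lemma ev_lt: "i < j \<Longrightarrow> ev T j i = - (\<Sum>k\<in>{i<..j}. T $$ (i,k) * ev T j k) / (T $$ (i,i) - T $$ (j,j))"
  by (subst ev.simps) simp

lemma sum_restrict_ij:
  fixes f :: "nat \<Rightarrow> 'a::field"
  assumes "i \<le> j" "j < n" "\<And>k. k < n \<Longrightarrow> k \<notin> {i..j} \<Longrightarrow> f k = 0"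
  shows "(\<Sum>k<n. f k) = f i + (\<Sum>k\<in>{i<..j}. f k)"
proof -
  have "(\<Sum>k<n. f k) = (\<Sum>k\<in>{i..j}. f k)"
    by (rule sum.mono_neutral_right) (use assms in auto)
  also have "{i..j} = insert i {i<..j}" using assms by auto
  finally show ?thesis by simp
qed

lemma upper_tri_diag:
  fixes T :: "'a::field mat"
  assumes T: "T \<in> carrier_mat n n"
    and ut: "\<And>i j. j < i \<Longrightarrow> i < n \<Longrightarrow> T $$ (i,j) = 0"
    and dist: "\<And>i j. i < j \<Longrightarrow> j < n \<Longrightarrow> T $$ (i,i) \<noteq> T $$ (j,j)"
  shows "\<exists>S Si. S \<in> carrier_mat n n \<and> Si \<in> carrier_mat n n \<and> S * Si = 1\<^sub>m n \<and> Si * S = 1\<^sub>m n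
          \<and> T = S * mat_diag n (\<lambda>i. T $$ (i,i)) * Si"
proof -
  define S where "S = mat n n (\<lambda>(i,j). ev T j i)"
  define D where "D = mat_diag n (\<lambda>i. T $$ (i,i))"
  have S: "S \<in> carrier_mat n n" unfolding S_def by simp
  have D: "D \<in> carrier_mat n n" unfolding D_def by simp
  have key: "(\<Sum>k<n. T $$ (i,k) * ev T j k) = ev T j i * T $$ (j,j)" if i: "i < n" and j: "j < n" for i j
  proof (cases "j < i")
    case True
    have "(\<Sum>k<n. T $$ (i,k) * ev T j k) = 0"
    proof (rule sum.neutral, intro ballI)
      fix k assume "k \<in> {..<n}"
      then show "T $$ (i,k) * ev T j k = 0"
        using True ut[of k i] i ev_gt[of j k T] by (cases "k < i") auto
    qed
    then show ?thesis using True ev_gt[of j i T] by simp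
  next
    case False
    have z: "T $$ (i,k) * ev T j k = 0" if "k < n" "k \<notin> {i..j}" for k
      using that ut[of k i] i ev_gt[of j k T] by (cases "k < i") auto
    have s: "(\<Sum>k<n. T $$ (i,k) * ev T j k) = T $$ (i,i) * ev T j i + (\<Sum>k\<in>{i<..j}. T $$ (i,k) * ev T j k)"
      by (rule sum_restrict_ij) (use False j z in auto)
    show ?thesis
    proof (cases "i = j")
      case True
      then show ?thesis using s by (simp add: ev_eq)
    next
      case False2: False
      with False have ij: "i < j" by simp
      have ne: "T $$ (i,i) - T $$ (j,j) \<noteq> 0" using dist[OF ij j] by simp
      have "ev T j i * (T $$ (i,i) - T $$ (j,j)) = - (\<Sum>k\<in>{i<..j}. T $$ (i,k) * ev T j k)"
        using ev_lt[OF ij, of T] ne by simp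
      then show ?thesis using s by (simp add: algebra_simps)
    qed
  qed
  have TS: "T * S = S * D"
  proof (rule eq_matI)
    fix i j assume i: "i < dim_row (S * D)" and j: "j < dim_col (S * D)"
    then have i': "i < n" and j': "j < n" using S D by auto
    have "(S * D) $$ (i,j) = ev T j i * T $$ (j,j)"
      unfolding D_def using mat_diag_mult_right[OF S] i' j' by (simp add: S_def)
    moreover have "(T * S) $$ (i,j) = (\<Sum>k<n. T $$ (i,k) * ev T j k)"
      using T i' j' by (simp add: S_def scalar_prod_def row_def col_def lessThan_atLeast0)
    ultimately show "(T * S) $$ (i,j) = (S * D) $$ (i,j)" using key[OF i' j'] by simp
  qed (use T S D in auto)
  have "upper_triangular S" unfolding upper_triangular_def S_def by (auto simp: ev_gt)
  then have "det S = prod_list (diag_mat S)" using det_upper_triangular S by blast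
  also have "diag_mat S = replicate n 1" unfolding diag_mat_def S_def
    by (rule nth_equalityI) (auto simp: ev_eq)
  finally have "det S = 1" by simp
  then have "S \<in> Units (ring_mat TYPE('a) n ())" using det_non_zero_imp_unit[OF S] by simp
  then obtain Si where Si: "Si \<in> carrier_mat n n" and SiS: "Si * S = 1\<^sub>m n" and SSi: "S * Si = 1\<^sub>m n"
    unfolding Units_def ring_mat_def by auto
  have "T = T * (S * Si)" using T SSi by simp
  also have "\<dots> = (T * S) * Si" using T S Si by simp
  also have "\<dots> = S * D * Si" using TS by simp
  finally show ?thesis using S Si SSi SiS unfolding D_def by blast
qed

lemma lower_tri_diag:
  fixes T :: "'a::field mat"
  assumes T: "T \<in> carrier_mat n n"
    and lt: "\<And>i j. i < j \<Longrightarrow> j < n \<Longrightarrow> T $$ (i,j) = 0"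
    and dist: "\<And>i j. i < j \<Longrightarrow> j < n \<Longrightarrow> T $$ (i,i) \<noteq> T $$ (j,j)"
  shows "\<exists>S Si. S \<in> carrier_mat n n \<and> Si \<in> carrier_mat n n \<and> S * Si = 1\<^sub>m n \<and> Si * S = 1\<^sub>m n
          \<and> T = S * mat_diag n (\<lambda>i. T $$ (i,i)) * Si"
proof -
  have Tt: "transpose_mat T \<in> carrier_mat n n" using T by simp
  obtain S Si where S: "S \<in> carrier_mat n n" and Si: "Si \<in> carrier_mat n n"
    and SSi: "S * Si = 1\<^sub>m n" and SiS: "Si * S = 1\<^sub>m n"
    and e: "transpose_mat T = S * mat_diag n (\<lambda>i. transpose_mat T $$ (i,i)) * Si"
    using upper_tri_diag[OF Tt] lt dist T by auto
  define D where "D = mat_diag n (\<lambda>i. T $$ (i,i))"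
  have D: "D \<in> carrier_mat n n" unfolding D_def by simp
  have "mat_diag n (\<lambda>i. transpose_mat T $$ (i,i)) = D"
    unfolding D_def using T by (intro eq_matI) (auto simp: mat_diag_def)
  with e have e2: "transpose_mat T = S * D * Si" by simp
  have "T = transpose_mat (transpose_mat T)" by simp
  also have "\<dots> = transpose_mat (S * D * Si)" using e2 by simp
  also have "\<dots> = transpose_mat Si * transpose_mat (S * D)"
    by (rule transpose_mult) (use S D Si in auto)
  also have "transpose_mat (S * D) = transpose_mat D * transpose_mat S"
    by (rule transpose_mult) (use S D in auto)
  also have "transpose_mat D = D" unfolding D_def by (intro eq_matI) (auto simp: mat_diag_def)
  finally have e3: "T = transpose_mat Si * (D * transpose_mat S)" .
  have i1: "transpose_mat Si * transpose_mat S = 1\<^sub>m n"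
    using transpose_mult[OF S Si, symmetric] SSi by simp
  have i2: "transpose_mat S * transpose_mat Si = 1\<^sub>m n"
    using transpose_mult[OF Si S, symmetric] SiS by simp
  have "T = transpose_mat Si * D * transpose_mat S" using e3 S Si D by simp
  then show ?thesis using i1 i2 S Si unfolding D_def
    by (intro exI[of _ "transpose_mat Si"] exI[of _ "transpose_mat S"]) auto
qed



definition perm_mat :: "nat \<Rightarrow> (nat \<Rightarrow> nat) \<Rightarrow> 'a::field mat" where
  "perm_mat n \<sigma> = mat n n (\<lambda>(i,j). if j = \<sigma> i then 1 else 0)"

definition invol :: "nat \<Rightarrow> (nat \<Rightarrow> nat) \<Rightarrow> bool" where
  "invol n \<sigma> \<longleftrightarrow> (\<forall>i<n. \<sigma> i < n \<and> \<sigma> (\<sigma> i) = i)"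

lemma invol_lt: "invol n \<sigma> \<Longrightarrow> i < n \<Longrightarrow> \<sigma> i < n"
  unfolding invol_def by blast
lemma invol_inv: "invol n \<sigma> \<Longrightarrow> i < n \<Longrightarrow> \<sigma> (\<sigma> i) = i"
  unfolding invol_def by blast
lemma invol_eq: "invol n \<sigma> \<Longrightarrow> i < n \<Longrightarrow> j < n \<Longrightarrow> (\<sigma> i = \<sigma> j) = (i = j)"
  by (metis invol_inv)

lemma perm_mat_carrier[simp]: "perm_mat n \<sigma> \<in> carrier_mat n n"
  unfolding perm_mat_def by simp

lemma perm_mat_dims[simp]: "dim_row (perm_mat n \<sigma>) = n" "dim_col (perm_mat n \<sigma>) = n"
  unfolding perm_mat_def by simp_all

lemma perm_mat_row:
  assumes s: "invol n \<sigma>" and i: "i < n"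
  shows "row (perm_mat n \<sigma> :: 'a::field mat) i = unit_vec n (\<sigma> i)"
  by (rule eq_vecI) (use i in \<open>auto simp: perm_mat_def unit_vec_def\<close>)

lemma perm_mat_col:
  assumes s: "invol n \<sigma>" and j: "j < n"
  shows "col (perm_mat n \<sigma> :: 'a::field mat) j = unit_vec n (\<sigma> j)"
proof (rule eq_vecI)
  fix k assume "k < dim_vec (unit_vec n (\<sigma> j) :: 'a vec)"
  then have k: "k < n" by simp
  have "\<sigma> (\<sigma> k) = k" "\<sigma> (\<sigma> j) = j" using invol_inv[OF s] k j by auto
  then have "(j = \<sigma> k) = (k = \<sigma> j)" by metis
  then show "col (perm_mat n \<sigma> :: 'a::field mat) j $ k = unit_vec n (\<sigma> j) $ k"
    using k j by (simp add: perm_mat_def unit_vec_def)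
qed simp

lemma perm_mat_left:
  fixes A :: "'a::field mat"
  assumes s: "invol n \<sigma>" and A: "A \<in> carrier_mat n m" and i: "i < n" and j: "j < m"
  shows "(perm_mat n \<sigma> * A) $$ (i,j) = A $$ (\<sigma> i, j)"
proof -
  have si: "\<sigma> i < n" using invol_lt[OF s i] .
  have "(perm_mat n \<sigma> * A) $$ (i,j) = row (perm_mat n \<sigma>) i \<bullet> col A j"
    using A i j by simp
  also have "\<dots> = col A j $ (\<sigma> i)" unfolding perm_mat_row[OF s i]
    by (rule scalar_prod_left_unit) (use A si in auto)
  also have "\<dots> = A $$ (\<sigma> i, j)" using A si j by simp
  finally show ?thesis .
qed

lemma perm_mat_right:
  fixes A :: "'a::field mat"
  assumes s: "invol n \<sigma>" and A: "A \<in> carrier_mat m n" and i: "i < m" and j: "j < n"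
  shows "(A * perm_mat n \<sigma>) $$ (i,j) = A $$ (i, \<sigma> j)"
proof -
  have sj: "\<sigma> j < n" using invol_lt[OF s j] .
  have "(A * perm_mat n \<sigma>) $$ (i,j) = row A i \<bullet> col (perm_mat n \<sigma>) j"
    using A i j by simp
  also have "\<dots> = row A i $ (\<sigma> j)" unfolding perm_mat_col[OF s j]
    by (rule scalar_prod_right_unit) (use sj in auto)
  also have "\<dots> = A $$ (i, \<sigma> j)" using A sj i by simp
  finally show ?thesis .
qed

lemma perm_mat_sq:
  assumes s: "invol n \<sigma>"
  shows "perm_mat n \<sigma> * perm_mat n \<sigma> = (1\<^sub>m n :: 'a::field mat)"
proof (rule eq_matI)
  fix i j assume "i < dim_row (1\<^sub>m n :: 'a mat)" "j < dim_col (1\<^sub>m n :: 'a mat)"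
  then have i: "i < n" and j: "j < n" by auto
  have "(perm_mat n \<sigma> * perm_mat n \<sigma>) $$ (i,j) = (perm_mat n \<sigma> :: 'a mat) $$ (\<sigma> i, j)"
    by (rule perm_mat_left[OF s _ i j]) simp
  also have "\<dots> = (1\<^sub>m n :: 'a mat) $$ (i,j)" using invol_lt[OF s i] invol_inv[OF s i] i j
    unfolding perm_mat_def by auto
  finally show "(perm_mat n \<sigma> * perm_mat n \<sigma>) $$ (i,j) = (1\<^sub>m n :: 'a mat) $$ (i,j)" .
qed auto

lemma perm_conj_index:
  fixes A :: "'a::field mat"
  assumes s: "invol n \<sigma>" and A: "A \<in> carrier_mat n n" and i: "i < n" and j: "j < n"
  shows "(perm_mat n \<sigma> * A * perm_mat n \<sigma>) $$ (i,j) = A $$ (\<sigma> i, \<sigma> j)"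
proof -
  have "(perm_mat n \<sigma> * A * perm_mat n \<sigma>) $$ (i,j) = (perm_mat n \<sigma> * A) $$ (i, \<sigma> j)"
    by (rule perm_mat_right[OF s _ i j]) (use A in \<open>simp add: mult_carrier_mat[of _ n n A n]\<close>)
  also have "\<dots> = A $$ (\<sigma> i, \<sigma> j)"
    by (rule perm_mat_left[OF s A i]) (use invol_lt[OF s j] in auto)
  finally show ?thesis .
qed


lemma diag_perm_in:
  fixes Y :: "'a::field mat" and u :: "nat \<Rightarrow> 'a"
  assumes s: "invol n \<sigma>" and Y: "Y \<in> carrier_mat n n"
    and inj: "inj_on (\<lambda>i. poly p (u i)) {..<n}"
    and dg: "\<And>i. i < n \<Longrightarrow> Y $$ (i,i) = poly p (u i) - poly p (u (\<sigma> i))"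
  shows "Y \<in> poly_commutators p n"
proof -
  define w where "w i = poly p (u i)" for i
  define W where "W = mat n n (\<lambda>(i,j). if i = j then w i else if i < j then Y $$ (i,j) else 0)"
  define W' where "W' = mat n n (\<lambda>(i,j). if i = j then w (\<sigma> i) else if j < i then - Y $$ (i,j) else 0)"
  define Pm where "Pm = (perm_mat n \<sigma> :: 'a mat)"
  have Pi: "Pm \<in> carrier_mat n n" unfolding Pm_def by simp
  have PiPi: "Pm * Pm = 1\<^sub>m n" unfolding Pm_def by (rule perm_mat_sq[OF s])
  have W: "W \<in> carrier_mat n n" unfolding W_def by simp
  have W': "W' \<in> carrier_mat n n" unfolding W'_def by simp
  have YW: "Y = W - W'"
    by (rule eq_matI) (use Y dg in \<open>auto simp: W_def W'_def w_def\<close>)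
  have winj: "w i \<noteq> w j" if "i < n" "j < n" "i \<noteq> j" for i j
    using inj that unfolding w_def inj_on_def by auto
  obtain S Si where S: "S \<in> carrier_mat n n" and Si: "Si \<in> carrier_mat n n"
    and SSi: "S * Si = 1\<^sub>m n" and SiS: "Si * S = 1\<^sub>m n"
    and We: "W = S * mat_diag n (\<lambda>i. W $$ (i,i)) * Si"
  proof -
    have "\<exists>S Si. S \<in> carrier_mat n n \<and> Si \<in> carrier_mat n n \<and> S * Si = 1\<^sub>m n \<and> Si * S = 1\<^sub>m n
          \<and> W = S * mat_diag n (\<lambda>i. W $$ (i,i)) * Si"
    proof (rule upper_tri_diag[OF W])
      fix i j assume "j < i" "i < n"
      then show "W $$ (i,j) = 0" unfolding W_def by auto
    next
      fix i j assume ij: "i < j" "j < n"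
      then show "W $$ (i,i) \<noteq> W $$ (j,j)" using winj[of i j] unfolding W_def by auto
    qed
    then show ?thesis using that by blast
  qed
  obtain S' Si' where S': "S' \<in> carrier_mat n n" and Si': "Si' \<in> carrier_mat n n"
    and SSi': "S' * Si' = 1\<^sub>m n" and SiS': "Si' * S' = 1\<^sub>m n"
    and We': "W' = S' * mat_diag n (\<lambda>i. W' $$ (i,i)) * Si'"
  proof -
    have "\<exists>S Si. S \<in> carrier_mat n n \<and> Si \<in> carrier_mat n n \<and> S * Si = 1\<^sub>m n \<and> Si * S = 1\<^sub>m n
          \<and> W' = S * mat_diag n (\<lambda>i. W' $$ (i,i)) * Si"
    proof (rule lower_tri_diag[OF W'])
      fix i j assume "i < j" "j < n"
      then show "W' $$ (i,j) = 0" unfolding W'_def by auto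
    next
      fix i j assume ij: "i < j" "j < n"
      have "\<sigma> i < n" "\<sigma> j < n" using invol_lt[OF s] ij by auto
      moreover have "\<sigma> i \<noteq> \<sigma> j" using invol_eq[OF s, of i j] ij by auto
      ultimately show "W' $$ (i,i) \<noteq> W' $$ (j,j)" using winj ij unfolding W'_def by auto
    qed
    then show ?thesis using that by blast
  qed
  define D where "D = mat_diag n w"
  have D: "D \<in> carrier_mat n n" unfolding D_def by simp
  have dW: "mat_diag n (\<lambda>i. W $$ (i,i)) = D" unfolding D_def W_def by (intro eq_matI) (auto simp: mat_diag_def)
  have dW': "mat_diag n (\<lambda>i. W' $$ (i,i)) = Pm * D * Pm"
  proof (rule eq_matI)
    fix i j assume "i < dim_row (Pm * D * Pm)" "j < dim_col (Pm * D * Pm)"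
    then have i: "i < n" and j: "j < n" using Pi D by auto
    have "(Pm * D * Pm) $$ (i,j) = D $$ (\<sigma> i, \<sigma> j)" unfolding Pm_def
      by (rule perm_conj_index[OF s D i j])
    also have "\<dots> = (if i = j then w (\<sigma> i) else 0)"
    proof -
      have eqv: "(\<sigma> i = \<sigma> j) = (i = j)" using invol_eq[OF s i j] .
      have "\<sigma> i < n" "\<sigma> j < n" using invol_lt[OF s] i j by auto
      then show ?thesis using eqv unfolding D_def mat_diag_def by simp
    qed
    finally show "mat_diag n (\<lambda>i. W' $$ (i,i)) $$ (i,j) = (Pm * D * Pm) $$ (i,j)"
      using i j unfolding W'_def mat_diag_def by simp
  qed (use Pi D in \<open>auto simp: mat_diag_def\<close>)
  define Du where "Du = mat_diag n u"
  have Du: "Du \<in> carrier_mat n n" unfolding Du_def by simp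
  have DDu: "mat_poly p Du = D" unfolding Du_def D_def w_def by (rule mat_poly_diag)
  define Q0 where "Q0 = S * Du * Si"
  have Q0: "Q0 \<in> carrier_mat n n" unfolding Q0_def using S Du Si by simp
  have WQ: "mat_poly p Q0 = W" unfolding Q0_def using mat_poly_conj[OF Du S Si SSi SiS] DDu We dW by simp
  define P where "P = S' * Pm * Si"
  define R where "R = S * Pm * Si'"
  have P: "P \<in> carrier_mat n n" unfolding P_def using S' Pi Si by simp
  have R: "R \<in> carrier_mat n n" unfolding R_def using S Pi Si' by simp
  note assoc = assoc_mult_mat[of _ n n _ n _ n]
  have c1: "Si * (S * X) = X" if "X \<in> carrier_mat n n" for X using inv_cancel[OF Si S SiS that] .
  have c2: "Pm * (Pm * X) = X" if "X \<in> carrier_mat n n" for X using inv_cancel[OF Pi Pi PiPi that] .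
  have c3: "Si' * (S' * X) = X" if "X \<in> carrier_mat n n" for X using inv_cancel[OF Si' S' SiS' that] .
  have c4: "S * (Si * X) = X" if "X \<in> carrier_mat n n" for X using inv_cancel[OF S Si SSi that] .
  have c5: "S' * (Si' * X) = X" if "X \<in> carrier_mat n n" for X using inv_cancel[OF S' Si' SSi' that] .
  have PR: "P * R = 1\<^sub>m n"
    unfolding P_def R_def using S Si S' Si' Pi SSi' by (simp add: assoc c1 c2)
  have RP: "R * P = 1\<^sub>m n"
    unfolding P_def R_def using S Si S' Si' Pi SSi by (simp add: assoc c3 c2)
  have "P * W * R = W'"
  proof -
    have "P * W * R = S' * (Pm * (Si * (S * (D * (Si * (S * (Pm * Si')))))))"
      unfolding P_def R_def using We dW S Si S' Si' Pi D by (simp add: assoc)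
    also have "\<dots> = S' * (Pm * (D * (Pm * Si')))" using S Si S' Si' Pi D by (simp add: c1)
    also have "\<dots> = W'" using We' dW' S' Si' Pi D by (simp add: assoc)
    finally show ?thesis .
  qed
  then have "Y = mat_poly p Q0 - P * mat_poly p Q0 * R" using YW WQ by simp
  then show ?thesis using comm_of_sim[OF Q0 P R PR RP] by simp
qed



definition sw :: "nat \<Rightarrow> nat" where
  "sw i = (if i = 0 then 1 else if i = 1 then 0 else i)"

definition gdiag :: "(nat \<Rightarrow> 'a::field) \<Rightarrow> nat \<Rightarrow> 'a mat \<Rightarrow> bool" where
  "gdiag w n Z \<longleftrightarrow> Z \<in> carrier_mat n n \<and>
     ((\<forall>i<n. Z $$ (i,i) = 0) \<or> (\<forall>i<n. Z $$ (i,i) = w i - w (sw i)))"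

definition Gset :: "(nat \<Rightarrow> 'a::field) \<Rightarrow> nat \<Rightarrow> 'a mat set" where
  "Gset w n = {X. \<exists>P Z R. P \<in> carrier_mat n n \<and> R \<in> carrier_mat n n \<and> P * R = 1\<^sub>m n \<and> R * P = 1\<^sub>m n
      \<and> gdiag w n Z \<and> X = P * Z * R}"

definition fprop :: "(nat \<Rightarrow> 'a::field) \<Rightarrow> nat \<Rightarrow> 'a mat \<Rightarrow> bool" where
  "fprop w n M \<longleftrightarrow> (\<exists>X Y Xi. X \<in> Gset w n \<and> Y \<in> Gset w n \<and> Xi \<in> carrier_mat n n
      \<and> X * Xi = 1\<^sub>m n \<and> M = X * Y)"

lemma Gset_carrier: "X \<in> Gset w n \<Longrightarrow> X \<in> carrier_mat n n"
  unfolding Gset_def gdiag_def by auto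

lemma gdiag_Gset:
  assumes "gdiag w n Z" shows "Z \<in> Gset w n"
proof -
  have Z: "Z \<in> carrier_mat n n" using assms unfolding gdiag_def by auto
  have "Z = 1\<^sub>m n * Z * 1\<^sub>m n" using Z by simp
  then show ?thesis unfolding Gset_def using assms by (intro CollectI exI[of _ "1\<^sub>m n"] exI[of _ Z]) auto
qed

lemma Gset_conj:
  fixes P :: "'a::field mat"
  assumes X: "X \<in> Gset w n" and P: "P \<in> carrier_mat n n" and R: "R \<in> carrier_mat n n"
    and PR: "P * R = 1\<^sub>m n" and RP: "R * P = 1\<^sub>m n"
  shows "P * X * R \<in> Gset w n"
proof -
  obtain P1 Z R1 where P1: "P1 \<in> carrier_mat n n" and R1: "R1 \<in> carrier_mat n n"
    and P1R1: "P1 * R1 = 1\<^sub>m n" and R1P1: "R1 * P1 = 1\<^sub>m n" and g: "gdiag w n Z" and Xe: "X = P1 * Z * R1"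
    using X unfolding Gset_def by blast
  have Z: "Z \<in> carrier_mat n n" using g unfolding gdiag_def by auto
  note assoc = assoc_mult_mat[of _ n n _ n _ n]
  have e: "P * X * R = (P * P1) * Z * (R1 * R)" unfolding Xe using P P1 Z R1 R by (simp add: assoc)
  have i1: "(P * P1) * (R1 * R) = 1\<^sub>m n"
    using P P1 R1 R P1R1 PR by (simp add: assoc inv_cancel[OF P1 R1 P1R1, of _ n])
  have i2: "(R1 * R) * (P * P1) = 1\<^sub>m n"
    using P P1 R1 R R1P1 RP by (simp add: assoc inv_cancel[OF R P RP, of _ n])
  show ?thesis unfolding Gset_def e
    by (intro CollectI exI[of _ "P * P1"] exI[of _ Z] exI[of _ "R1 * R"]) (use P P1 R1 R i1 i2 g in auto)
qed

lemma conj_reduce: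
  fixes P :: "'a::field mat"
  assumes M: "M \<in> carrier_mat n n" and P: "P \<in> carrier_mat n n" and R: "R \<in> carrier_mat n n"
    and PR: "P * R = 1\<^sub>m n" and RP: "R * P = 1\<^sub>m n" and h: "fprop w n (P * M * R)"
  shows "fprop w n M"
proof -
  obtain X Y Xi where X: "X \<in> Gset w n" and Y: "Y \<in> Gset w n" and Xi: "Xi \<in> carrier_mat n n"
    and XXi: "X * Xi = 1\<^sub>m n" and e: "P * M * R = X * Y"
    using h unfolding fprop_def by blast
  have Xc: "X \<in> carrier_mat n n" and Yc: "Y \<in> carrier_mat n n" using X Y Gset_carrier by auto
  note assoc = assoc_mult_mat[of _ n n _ n _ n]
  have "M = R * (P * M * R) * P" using M P R RP by (simp add: assoc inv_cancel[OF R P RP, of _ n])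
  also have "\<dots> = (R * X * P) * (R * Y * P)" unfolding e using Xc Yc P R PR by (simp add: assoc inv_cancel[OF P R PR, of _ n])
  finally have Me: "M = (R * X * P) * (R * Y * P)" .
  have inv: "(R * X * P) * (R * Xi * P) = 1\<^sub>m n"
    using Xc Xi P R PR RP XXi by (simp add: assoc inv_cancel[OF P R PR, of _ n] inv_cancel[OF Xc Xi XXi, of _ n])
  show ?thesis unfolding fprop_def
    by (intro exI[of _ "R * X * P"] exI[of _ "R * Y * P"] exI[of _ "R * Xi * P"])
      (use Gset_conj[OF X R P RP PR] Gset_conj[OF Y R P RP PR] Xi P R inv Me in auto)
qed

definition cyc :: "nat \<Rightarrow> 'a::field mat" where
  "cyc n = mat n n (\<lambda>(i,j). if j = Suc i mod n then 1 else 0)"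

lemma suc_mod_eq: "i < n \<Longrightarrow> Suc i mod n = (if Suc i = n then 0 else Suc i)"
  by (simp add: mod_Suc)

lemma suc_mod_inj: "i < n \<Longrightarrow> j < n \<Longrightarrow> Suc i mod n = Suc j mod n \<Longrightarrow> i = j"
  by (auto simp: suc_mod_eq split: if_splits)

lemma cyc_carrier[simp]: "cyc n \<in> carrier_mat n n" unfolding cyc_def by simp
lemma cyc_dims[simp]: "dim_row (cyc n) = n" "dim_col (cyc n) = n" unfolding cyc_def by simp_all

lemma cyc_diag: "2 \<le> n \<Longrightarrow> i < n \<Longrightarrow> (cyc n :: 'a::field mat) $$ (i,i) = 0"
  unfolding cyc_def by (auto simp: suc_mod_eq)

lemma cyc_row: "i < n \<Longrightarrow> row (cyc n :: 'a::field mat) i = unit_vec n (Suc i mod n)"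
  by (rule eq_vecI) (auto simp: cyc_def unit_vec_def)

lemma cyc_inv: "(cyc n :: 'a::field mat) * transpose_mat (cyc n) = 1\<^sub>m n"
proof (rule eq_matI)
  fix i j assume "i < dim_row (1\<^sub>m n :: 'a mat)" "j < dim_col (1\<^sub>m n :: 'a mat)"
  then have i: "i < n" and j: "j < n" by auto
  have ni: "Suc i mod n < n" "Suc j mod n < n" using i by auto
  have "(cyc n * transpose_mat (cyc n) :: 'a mat) $$ (i,j) = row (cyc n) i \<bullet> row (cyc n) j"
    using i j by simp
  also have "\<dots> = (unit_vec n (Suc j mod n) :: 'a vec) $ (Suc i mod n)"
    unfolding cyc_row[OF i] cyc_row[OF j] by (rule scalar_prod_left_unit) (use ni in auto)
  also have "\<dots> = (if i = j then 1 else 0)" using ni suc_mod_inj[OF i j] by (auto simp: unit_vec_def)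
  finally show "(cyc n * transpose_mat (cyc n) :: 'a mat) $$ (i,j) = (1\<^sub>m n :: 'a mat) $$ (i,j)"
    using i j by simp
qed auto

lemma diag_case:
  fixes M :: "'a::field mat"
  assumes n: "2 \<le> n" and M: "M \<in> carrier_mat n n"
    and dg: "\<And>i j. i < n \<Longrightarrow> j < n \<Longrightarrow> i \<noteq> j \<Longrightarrow> M $$ (i,j) = 0"
  shows "fprop w n M"
proof -
  define C where "C = (cyc n :: 'a mat)"
  have C: "C \<in> carrier_mat n n" "transpose_mat C \<in> carrier_mat n n" unfolding C_def by auto
  have CC: "C * transpose_mat C = 1\<^sub>m n" unfolding C_def by (rule cyc_inv)
  have Md: "M = mat_diag n (\<lambda>i. M $$ (i,i))"
    by (rule eq_matI) (use M dg in \<open>auto simp: mat_diag_def\<close>)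
  define Y where "Y = transpose_mat C * M"
  have Y: "Y \<in> carrier_mat n n" unfolding Y_def using C M by simp
  have Yd: "Y $$ (i,i) = 0" if i: "i < n" for i
  proof -
    have "Y = transpose_mat C * mat_diag n (\<lambda>i. M $$ (i,i))" unfolding Y_def using Md by simp
    also have "\<dots> = mat n n (\<lambda>(i,j). transpose_mat C $$ (i,j) * M $$ (j,j))"
      by (rule mat_diag_mult_right) (use C in auto)
    finally have "Y $$ (i,i) = transpose_mat C $$ (i,i) * M $$ (i,i)" using i by simp
    then show ?thesis using cyc_diag[OF n i, where 'a='a] C i unfolding C_def by simp
  qed
  have gC: "gdiag w n C" unfolding gdiag_def using C cyc_diag[OF n, where 'a='a] unfolding C_def by auto
  have gY: "gdiag w n Y" unfolding gdiag_def using Y Yd by auto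
  have "C * Y = M" unfolding Y_def
    using inv_cancel[of C n "transpose_mat C" M n] C CC M by simp
  then show ?thesis unfolding fprop_def
    by (intro exI[of _ C] exI[of _ Y] exI[of _ "transpose_mat C"]) (use gdiag_Gset[OF gC] gdiag_Gset[OF gY] C CC in auto)
qed

lemma fb_carrier:
  "A \<in> carrier_mat k k \<Longrightarrow> B \<in> carrier_mat k 1 \<Longrightarrow> C \<in> carrier_mat 1 k \<Longrightarrow> Dd \<in> carrier_mat 1 1
   \<Longrightarrow> four_block_mat A B C Dd \<in> carrier_mat (Suc k) (Suc k)"
  using four_block_carrier_mat[of A k k Dd 1 1 B C] by simp

lemma border_G:
  fixes X1 :: "'a::field mat"
  assumes k: "2 \<le> k" and X1: "X1 \<in> Gset w k" and D: "D \<in> carrier_mat k 1" and E: "E \<in> carrier_mat 1 k"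
  shows "four_block_mat X1 D E (0\<^sub>m 1 1) \<in> Gset w (Suc k)"
proof -
  obtain P1 Z R1 where P1: "P1 \<in> carrier_mat k k" and R1: "R1 \<in> carrier_mat k k"
    and P1R1: "P1 * R1 = 1\<^sub>m k" and R1P1: "R1 * P1 = 1\<^sub>m k" and g: "gdiag w k Z" and Xe: "X1 = P1 * Z * R1"
    using X1 unfolding Gset_def by blast
  have Z: "Z \<in> carrier_mat k k" using g unfolding gdiag_def by auto
  define Ph where "Ph = four_block_mat P1 (0\<^sub>m k 1) (0\<^sub>m 1 k) (1\<^sub>m 1 :: 'a mat)"
  define Rh where "Rh = four_block_mat R1 (0\<^sub>m k 1) (0\<^sub>m 1 k) (1\<^sub>m 1 :: 'a mat)"
  define Zh where "Zh = four_block_mat Z (R1 * D) (E * P1) (0\<^sub>m 1 1)"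
  have Ph: "Ph \<in> carrier_mat (Suc k) (Suc k)" unfolding Ph_def by (rule fb_carrier) (use P1 in auto)
  have Rh: "Rh \<in> carrier_mat (Suc k) (Suc k)" unfolding Rh_def by (rule fb_carrier) (use R1 in auto)
  have Zh: "Zh \<in> carrier_mat (Suc k) (Suc k)" unfolding Zh_def by (rule fb_carrier) (use Z R1 D E P1 in auto)
  have "Ph * Zh = four_block_mat (P1 * Z + 0\<^sub>m k 1 * (E * P1)) (P1 * (R1 * D) + 0\<^sub>m k 1 * 0\<^sub>m 1 1)
           (0\<^sub>m 1 k * Z + 1\<^sub>m 1 * (E * P1)) (0\<^sub>m 1 k * (R1 * D) + 1\<^sub>m 1 * 0\<^sub>m 1 1)"
    unfolding Ph_def Zh_def by (rule mult_four_block_mat) (use P1 Z R1 D E in auto)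
  also have "\<dots> = four_block_mat (P1 * Z) D (E * P1) (0\<^sub>m 1 1)"
    using P1 Z R1 D E by (simp add: inv_cancel[OF P1 R1 P1R1, of _ 1])
  finally have PZ: "Ph * Zh = four_block_mat (P1 * Z) D (E * P1) (0\<^sub>m 1 1)" .
  have "Ph * Zh * Rh = four_block_mat (P1 * Z * R1 + D * 0\<^sub>m 1 k) (P1 * Z * 0\<^sub>m k 1 + D * 1\<^sub>m 1)
           (E * P1 * R1 + 0\<^sub>m 1 1 * 0\<^sub>m 1 k) (E * P1 * 0\<^sub>m k 1 + 0\<^sub>m 1 1 * 1\<^sub>m 1)"
    unfolding PZ Rh_def by (rule mult_four_block_mat) (use P1 Z R1 D E in auto)
  also have "\<dots> = four_block_mat X1 D E (0\<^sub>m 1 1)"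
  proof -
    have "E * P1 * R1 = E" using E P1 R1 P1R1 by simp
    then show ?thesis unfolding Xe using P1 Z R1 D E by simp
  qed
  finally have e: "four_block_mat X1 D E (0\<^sub>m 1 1) = Ph * Zh * Rh" by simp
  have "Ph * Rh = four_block_mat (P1 * R1 + 0\<^sub>m k 1 * 0\<^sub>m 1 k) (P1 * 0\<^sub>m k 1 + 0\<^sub>m k 1 * 1\<^sub>m 1)
           (0\<^sub>m 1 k * R1 + 1\<^sub>m 1 * 0\<^sub>m 1 k) (0\<^sub>m 1 k * 0\<^sub>m k 1 + 1\<^sub>m 1 * (1\<^sub>m 1 :: 'a mat))"
    unfolding Ph_def Rh_def by (rule mult_four_block_mat) (use P1 R1 in auto)
  also have "\<dots> = 1\<^sub>m (Suc k)" using P1 R1 P1R1 four_block_one_mat[of k 1] by simp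
  finally have PR: "Ph * Rh = 1\<^sub>m (Suc k)" .
  have "Rh * Ph = four_block_mat (R1 * P1 + 0\<^sub>m k 1 * 0\<^sub>m 1 k) (R1 * 0\<^sub>m k 1 + 0\<^sub>m k 1 * 1\<^sub>m 1)
           (0\<^sub>m 1 k * P1 + 1\<^sub>m 1 * 0\<^sub>m 1 k) (0\<^sub>m 1 k * 0\<^sub>m k 1 + 1\<^sub>m 1 * (1\<^sub>m 1 :: 'a mat))"
    unfolding Ph_def Rh_def by (rule mult_four_block_mat) (use P1 R1 in auto)
  also have "\<dots> = 1\<^sub>m (Suc k)" using P1 R1 R1P1 four_block_one_mat[of k 1] by simp
  finally have RP: "Rh * Ph = 1\<^sub>m (Suc k)" .
  have gZ: "gdiag w (Suc k) Zh"
  proof -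
    have zd: "Zh $$ (i,i) = (if i < k then Z $$ (i,i) else 0)" if "i < Suc k" for i
      unfolding Zh_def using that Z R1 D E P1 by auto
    have swk: "\<And>i. \<not> i < k \<Longrightarrow> i < Suc k \<Longrightarrow> sw i = i" using k unfolding sw_def by auto
    from g have "(\<forall>i<k. Z $$ (i,i) = 0) \<or> (\<forall>i<k. Z $$ (i,i) = w i - w (sw i))" unfolding gdiag_def by auto
    then have "(\<forall>i<Suc k. Zh $$ (i,i) = 0) \<or> (\<forall>i<Suc k. Zh $$ (i,i) = w i - w (sw i))"
      using zd swk by (auto simp: less_Suc_eq)
    then show ?thesis unfolding gdiag_def using Zh by auto
  qed
  show ?thesis unfolding Gset_def e
    by (intro CollectI exI[of _ Ph] exI[of _ Zh] exI[of _ Rh]) (use Ph Rh PR RP gZ in auto)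
qed

lemma smult_smult_mat: "(a::'a::field) \<cdot>\<^sub>m (b \<cdot>\<^sub>m A) = (a * b) \<cdot>\<^sub>m A"
  by (rule eq_matI) auto

lemma mpc: "(A::'a::field mat) \<in> carrier_mat n m \<Longrightarrow> B \<in> carrier_mat n m \<Longrightarrow> A - B + B = A"
  by (rule eq_matI) auto
lemma mmc: "(A::'a::field mat) \<in> carrier_mat n m \<Longrightarrow> B \<in> carrier_mat n m \<Longrightarrow> A - (A - B) = B"
  by (rule eq_matI) auto
lemma smc: "(A::'a::field mat) \<in> carrier_mat n m \<Longrightarrow> c \<cdot>\<^sub>m A + (- c) \<cdot>\<^sub>m A = 0\<^sub>m n m"
  by (rule eq_matI) auto
lemma sm1: "(A::'a::field mat) \<in> carrier_mat n m \<Longrightarrow> A - 1 \<cdot>\<^sub>m A = 0\<^sub>m n m"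
  by (rule eq_matI) auto
lemma sm_one: "(1::'a::field) \<cdot>\<^sub>m A = A"
  by (rule eq_matI) auto
lemma add0r: "(A::'a::field mat) \<in> carrier_mat n m \<Longrightarrow> A + 0\<^sub>m n m = A"
  by (rule eq_matI) auto
lemma add0l: "(A::'a::field mat) \<in> carrier_mat n m \<Longrightarrow> 0\<^sub>m n m + A = A"
  by (rule eq_matI) auto

lemma main_step:
  fixes M :: "'a::field mat"
  assumes k: "2 \<le> k" and IH: "\<And>N. N \<in> carrier_mat k k \<Longrightarrow> fprop w k N"
    and M: "M \<in> carrier_mat (Suc k) (Suc k)" and j0: "j0 < k" and mj: "M $$ (j0, k) \<noteq> 0"
  shows "fprop w (Suc k) M"
proof -
  obtain M1 mm rr mu where sb: "split_block M k k = (M1, mm, rr, mu)"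
    by (cases "split_block M k k") auto
  have dimM: "dim_row M = k + 1" "dim_col M = k + 1" using M by auto
  note spl = split_block[OF sb dimM]
  have M1: "M1 \<in> carrier_mat k k" and mm: "mm \<in> carrier_mat k 1" and rr: "rr \<in> carrier_mat 1 k"
    and mu: "mu \<in> carrier_mat 1 1" and Me: "M = four_block_mat M1 mm rr mu" using spl by auto
  have mmj: "mm $$ (j0, 0) = M $$ (j0, k)"
  proof -
    have "mm = mat k (dim_col M - k) (\<lambda>(i,j). M $$ (i, j + k))"
      using sb unfolding split_block_def Let_def by auto
    then show ?thesis using j0 dimM by simp
  qed
  define a where "a = mm $$ (j0, 0)"
  have a: "a \<noteq> 0" using mj mmj unfolding a_def by simp
  define j1 where "j1 = (if j0 = 0 then 1 else 0 :: nat)"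
  have j1: "j1 < k" "j1 \<noteq> j0" using k j0 unfolding j1_def by auto
  define b where "b = (mu $$ (0,0) - a * mm $$ (j1,0)) / a"
  define hv where "hv = a \<cdot>\<^sub>v unit_vec k j1 + b \<cdot>\<^sub>v (unit_vec k j0 :: 'a vec)"
  have hv: "hv \<in> carrier_vec k" unfolding hv_def by simp
  define H where "H = mat_of_row hv"
  have H: "H \<in> carrier_mat 1 k" unfolding H_def using hv by simp
  have rowH: "row H 0 = hv" unfolding H_def using hv by (intro eq_vecI) (auto simp: mat_of_row_def)
  have hvdot: "hv \<bullet> v = a * v $ j1 + b * v $ j0" if v: "v \<in> carrier_vec k" for v
  proof -
    have u1: "unit_vec k j1 \<in> carrier_vec k" "unit_vec k j0 \<in> carrier_vec k" by auto
    have "hv \<bullet> v = (a \<cdot>\<^sub>v unit_vec k j1) \<bullet> v + (b \<cdot>\<^sub>v unit_vec k j0) \<bullet> v"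
      unfolding hv_def by (rule add_scalar_prod_distrib[of _ k]) (use v in auto)
    also have "(a \<cdot>\<^sub>v unit_vec k j1) \<bullet> v = a * (unit_vec k j1 \<bullet> v)"
      by (rule smult_scalar_prod_distrib[OF u1(1) v])
    also have "(b \<cdot>\<^sub>v unit_vec k j0) \<bullet> v = b * (unit_vec k j0 \<bullet> v)"
      by (rule smult_scalar_prod_distrib[OF u1(2) v])
    also have "unit_vec k j1 \<bullet> v = v $ j1" by (rule scalar_prod_left_unit[OF v j1(1)])
    also have "unit_vec k j0 \<bullet> v = v $ j0" by (rule scalar_prod_left_unit[OF v j0])
    finally show ?thesis .
  qed
  have Hmm: "H * mm = mu"
  proof (rule eq_matI)
    fix i j assume "i < dim_row mu" "j < dim_col mu"
    then have i: "i = 0" and j: "j = 0" using mu by auto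
    have e1: "(H * mm) $$ (0,0) = row H 0 \<bullet> col mm 0" by (rule index_mult_mat(1)) (use H mm in auto)
    have colc: "col mm 0 \<in> carrier_vec k" by (rule col_carrier_vec[OF _ mm]) simp
    have e2: "col mm 0 $ j1 = mm $$ (j1, 0)" "col mm 0 $ j0 = mm $$ (j0, 0)"
      by (rule index_col; use mm j0 j1 in auto)+
    have e3: "b * a = mu $$ (0,0) - a * mm $$ (j1,0)" unfolding b_def using a by simp
    have "(H * mm) $$ (0,0) = a * mm $$ (j1,0) + b * mm $$ (j0,0)"
      unfolding e1 rowH hvdot[OF colc] e2 ..
    also have "\<dots> = a * mm $$ (j1,0) + b * a" unfolding a_def ..
    also have "\<dots> = mu $$ (0,0)" unfolding e3 by simp
    finally show "(H * mm) $$ (i,j) = mu $$ (i,j)" unfolding i j .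
  next
    show "dim_row (H * mm) = dim_row mu" using H mu by simp
  next
    show "dim_col (H * mm) = dim_col mu" using mm mu by simp
  qed
  define Dm where "Dm = mat k 1 (\<lambda>(r,_). if r = j1 then 1 else (0::'a))"
  have Dm: "Dm \<in> carrier_mat k 1" unfolding Dm_def by simp
  have colDm: "col Dm 0 = unit_vec k j1" unfolding Dm_def by (intro eq_vecI) (auto simp: unit_vec_def)
  have HD: "H * Dm = a \<cdot>\<^sub>m 1\<^sub>m 1"
  proof (rule eq_matI)
    fix i j assume "i < dim_row (a \<cdot>\<^sub>m 1\<^sub>m 1 :: 'a mat)" "j < dim_col (a \<cdot>\<^sub>m 1\<^sub>m 1 :: 'a mat)"
    then have i: "i = 0" and j: "j = 0" by auto
    have e1: "(H * Dm) $$ (0,0) = row H 0 \<bullet> col Dm 0" by (rule index_mult_mat(1)) (use H Dm in auto)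
    have uc: "unit_vec k j1 \<in> carrier_vec k" by simp
    have "(H * Dm) $$ (0,0) = a * unit_vec k j1 $ j1 + b * unit_vec k j1 $ j0"
      unfolding e1 rowH colDm hvdot[OF uc] ..
    also have "\<dots> = a" using j0 j1 by (simp add: unit_vec_def)
    finally show "(H * Dm) $$ (i,j) = (a \<cdot>\<^sub>m 1\<^sub>m 1 :: 'a mat) $$ (i,j)" unfolding i j by simp
  next
    show "dim_row (H * Dm) = dim_row (a \<cdot>\<^sub>m 1\<^sub>m 1 :: 'a mat)" using H by simp
  next
    show "dim_col (H * Dm) = dim_col (a \<cdot>\<^sub>m 1\<^sub>m 1 :: 'a mat)" using Dm by simp
  qed
  define c where "c = 1 / a"
  have ca: "c * a = 1" unfolding c_def using a by simp
  define G where "G = c \<cdot>\<^sub>m (H * M1 - rr)"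
  have G: "G \<in> carrier_mat 1 k" unfolding G_def using H M1 rr by (simp add: minus_carrier_mat)
  define N where "N = M1 - Dm * G"
  have N: "N \<in> carrier_mat k k" unfolding N_def using M1 Dm G by (simp add: minus_carrier_mat)
  obtain X1 Y1 X1i where X1: "X1 \<in> Gset w k" and Y1: "Y1 \<in> Gset w k" and X1i: "X1i \<in> carrier_mat k k"
    and XX: "X1 * X1i = 1\<^sub>m k" and NXY: "N = X1 * Y1"
    using IH[OF N] unfolding fprop_def by blast
  have X1c: "X1 \<in> carrier_mat k k" and Y1c: "Y1 \<in> carrier_mat k k" using X1 Y1 Gset_carrier by auto
  note assoc = assoc_mult_mat[of _ k k _ k _ k]
  define F where "F = X1i * mm"
  have F: "F \<in> carrier_mat k 1" unfolding F_def using X1i mm by simp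
  define E where "E = H * X1"
  have E: "E \<in> carrier_mat 1 k" unfolding E_def using X1c H by simp
  define X where "X = four_block_mat X1 Dm E (0\<^sub>m 1 1)"
  define Y where "Y = four_block_mat Y1 F G (0\<^sub>m 1 1)"
  have XG: "X \<in> Gset w (Suc k)" unfolding X_def by (rule border_G[OF k X1 Dm E])
  have YG: "Y \<in> Gset w (Suc k)" unfolding Y_def by (rule border_G[OF k Y1 F G])
  have XY: "X * Y = four_block_mat (X1 * Y1 + Dm * G) (X1 * F + Dm * 0\<^sub>m 1 1)
      (E * Y1 + 0\<^sub>m 1 1 * G) (E * F + 0\<^sub>m 1 1 * 0\<^sub>m 1 1)"
    unfolding X_def Y_def by (rule mult_four_block_mat) (use X1c Dm E Y1c F G in auto)
  have b1: "X1 * Y1 + Dm * G = M1" unfolding NXY[symmetric] N_def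
    by (rule mpc) (use M1 Dm G in auto)
  have b2: "X1 * F + Dm * 0\<^sub>m 1 1 = mm"
  proof -
    have "X1 * F = mm" unfolding F_def using inv_cancel[OF X1c X1i XX mm] .
    moreover have "Dm * 0\<^sub>m 1 1 = 0\<^sub>m k 1" by (rule right_mult_zero_mat[OF Dm])
    ultimately show ?thesis using add0r[OF mm] by simp
  qed
  have b3: "E * Y1 + 0\<^sub>m 1 1 * G = rr"
  proof -
    have "E * Y1 = H * N" unfolding E_def NXY by (rule assoc_mult_mat) (use H X1c Y1c in auto)
    also have "\<dots> = H * M1 - H * (Dm * G)" unfolding N_def by (rule mult_minus_distrib_mat[OF H M1]) (use Dm G in auto)
    also have "H * (Dm * G) = (H * Dm) * G" by (rule assoc_mult_mat[symmetric]) (use H Dm G in auto)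
    also have "\<dots> = (a \<cdot>\<^sub>m 1\<^sub>m 1) * G" unfolding HD ..
    also have "\<dots> = a \<cdot>\<^sub>m (1\<^sub>m 1 * G)" by (rule mult_smult_assoc_mat) (use G in auto)
    also have "1\<^sub>m 1 * G = G" by (rule left_mult_one_mat[OF G])
    also have "a \<cdot>\<^sub>m G = H * M1 - rr" unfolding G_def smult_smult_mat using ca by (simp add: mult.commute sm_one)
    also have "H * M1 - (H * M1 - rr) = rr" by (rule mmc) (use H M1 rr in auto)
    finally have "E * Y1 = rr" .
    moreover have "0\<^sub>m 1 1 * G = 0\<^sub>m 1 k" by (rule left_mult_zero_mat[OF G])
    ultimately show ?thesis using add0r[OF rr] by simp
  qed
  have b4: "E * F + 0\<^sub>m 1 1 * 0\<^sub>m 1 1 = mu"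
  proof -
    have "E * F = H * (X1 * (X1i * mm))" unfolding E_def F_def
      by (rule assoc_mult_mat) (use H X1c X1i mm in auto)
    also have "X1 * (X1i * mm) = mm" using inv_cancel[OF X1c X1i XX mm] .
    finally have "E * F = mu" using Hmm by simp
    moreover have "0\<^sub>m 1 1 * 0\<^sub>m 1 1 = (0\<^sub>m 1 1 :: 'a mat)" by (rule left_mult_zero_mat) simp
    ultimately show ?thesis using add0r[OF mu] by simp
  qed
  have Mxy: "M = X * Y" unfolding XY b1 b2 b3 b4 Me ..
  define T where "T = X1i * Dm"
  define U where "U = E * X1i"
  have T: "T \<in> carrier_mat k 1" unfolding T_def using X1i Dm by simp
  have U: "U \<in> carrier_mat 1 k" unfolding U_def using X1i E by simp
  have X1T: "X1 * T = Dm" unfolding T_def using inv_cancel[OF X1c X1i XX Dm] .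
  have ET: "E * T = a \<cdot>\<^sub>m 1\<^sub>m 1"
  proof -
    have "E * T = H * (X1 * T)" unfolding E_def using H X1c T by simp
    then show ?thesis using X1T HD by simp
  qed
  define Xi where "Xi = four_block_mat (X1i - c \<cdot>\<^sub>m (T * U)) (c \<cdot>\<^sub>m T) (c \<cdot>\<^sub>m U) ((- c) \<cdot>\<^sub>m 1\<^sub>m 1)"
  have Xi: "Xi \<in> carrier_mat (Suc k) (Suc k)" unfolding Xi_def by (rule fb_carrier) (use X1i T U in auto)
  have XXi: "X * Xi = four_block_mat (X1 * (X1i - c \<cdot>\<^sub>m (T * U)) + Dm * (c \<cdot>\<^sub>m U))
      (X1 * (c \<cdot>\<^sub>m T) + Dm * ((- c) \<cdot>\<^sub>m 1\<^sub>m 1))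
      (E * (X1i - c \<cdot>\<^sub>m (T * U)) + 0\<^sub>m 1 1 * (c \<cdot>\<^sub>m U))
      (E * (c \<cdot>\<^sub>m T) + 0\<^sub>m 1 1 * ((- c) \<cdot>\<^sub>m 1\<^sub>m 1))"
    unfolding X_def Xi_def by (rule mult_four_block_mat) (use X1c Dm E X1i T U in auto)
  have TU: "T * U \<in> carrier_mat k k" using T U by simp
  have V: "Dm * U \<in> carrier_mat k k" using Dm U by simp
  have c1: "X1 * (X1i - c \<cdot>\<^sub>m (T * U)) + Dm * (c \<cdot>\<^sub>m U) = 1\<^sub>m k"
  proof -
    have "X1 * (X1i - c \<cdot>\<^sub>m (T * U)) = X1 * X1i - X1 * (c \<cdot>\<^sub>m (T * U))"
      by (rule mult_minus_distrib_mat[OF X1c X1i]) (use TU in auto)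
    also have "X1 * (c \<cdot>\<^sub>m (T * U)) = c \<cdot>\<^sub>m (X1 * (T * U))" by (rule mult_smult_distrib[OF X1c TU])
    also have "X1 * (T * U) = Dm * U"
    proof -
      have "X1 * (T * U) = (X1 * T) * U" by (rule assoc_mult_mat[symmetric]) (use X1c T U in auto)
      then show ?thesis unfolding X1T .
    qed
    finally have e1: "X1 * (X1i - c \<cdot>\<^sub>m (T * U)) = X1 * X1i - c \<cdot>\<^sub>m (Dm * U)" .
    have e2: "Dm * (c \<cdot>\<^sub>m U) = c \<cdot>\<^sub>m (Dm * U)" by (rule mult_smult_distrib[OF Dm U])
    have "X1 * X1i - c \<cdot>\<^sub>m (Dm * U) + c \<cdot>\<^sub>m (Dm * U) = X1 * X1i"
      by (rule mpc) (use X1c X1i V in auto)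
    then show ?thesis unfolding e1 e2 XX .
  qed
  have c2: "X1 * (c \<cdot>\<^sub>m T) + Dm * ((- c) \<cdot>\<^sub>m 1\<^sub>m 1) = 0\<^sub>m k 1"
  proof -
    have "X1 * (c \<cdot>\<^sub>m T) = c \<cdot>\<^sub>m Dm" using mult_smult_distrib[OF X1c T] X1T by simp
    moreover have "Dm * ((- c) \<cdot>\<^sub>m 1\<^sub>m 1) = (- c) \<cdot>\<^sub>m (Dm * 1\<^sub>m 1)" by (rule mult_smult_distrib[OF Dm one_carrier_mat])
    moreover have "Dm * 1\<^sub>m 1 = Dm" by (rule right_mult_one_mat[OF Dm])
    ultimately show ?thesis using smc[OF Dm, of c] by simp
  qed
  have c3: "E * (X1i - c \<cdot>\<^sub>m (T * U)) + 0\<^sub>m 1 1 * (c \<cdot>\<^sub>m U) = 0\<^sub>m 1 k"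
  proof -
    have "E * (X1i - c \<cdot>\<^sub>m (T * U)) = E * X1i - E * (c \<cdot>\<^sub>m (T * U))"
      by (rule mult_minus_distrib_mat[OF E X1i]) (use TU in auto)
    also have "E * (c \<cdot>\<^sub>m (T * U)) = c \<cdot>\<^sub>m (E * (T * U))" by (rule mult_smult_distrib[OF E TU])
    also have "E * (T * U) = (E * T) * U" by (rule assoc_mult_mat[symmetric]) (use E T U in auto)
    also have "\<dots> = a \<cdot>\<^sub>m (1\<^sub>m 1 * U)" unfolding ET by (rule mult_smult_assoc_mat) (use U in auto)
    also have "1\<^sub>m 1 * U = U" by (rule left_mult_one_mat[OF U])
    also have "c \<cdot>\<^sub>m (a \<cdot>\<^sub>m U) = 1 \<cdot>\<^sub>m U" unfolding smult_smult_mat ca ..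
    also have "E * X1i - 1 \<cdot>\<^sub>m U = 0\<^sub>m 1 k" unfolding U_def[symmetric] by (rule sm1[OF U])
    finally have "E * (X1i - c \<cdot>\<^sub>m (T * U)) = 0\<^sub>m 1 k" .
    moreover have "0\<^sub>m 1 1 * (c \<cdot>\<^sub>m U) = 0\<^sub>m 1 k" by (rule left_mult_zero_mat) (use U in simp)
    ultimately show ?thesis using add0r[of "0\<^sub>m 1 k :: 'a mat" 1 k] by simp
  qed
  have c4: "E * (c \<cdot>\<^sub>m T) + 0\<^sub>m 1 1 * ((- c) \<cdot>\<^sub>m 1\<^sub>m 1) = 1\<^sub>m 1"
  proof -
    have "E * (c \<cdot>\<^sub>m T) = c \<cdot>\<^sub>m (a \<cdot>\<^sub>m 1\<^sub>m 1)" using mult_smult_distrib[OF E T] ET by simp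
    also have "\<dots> = 1\<^sub>m 1" unfolding smult_smult_mat ca sm_one ..
    finally have "E * (c \<cdot>\<^sub>m T) = 1\<^sub>m 1" .
    moreover have "0\<^sub>m 1 1 * ((- c) \<cdot>\<^sub>m 1\<^sub>m 1) = (0\<^sub>m 1 1 :: 'a mat)" by (rule left_mult_zero_mat) simp
    ultimately show ?thesis using add0r[of "1\<^sub>m 1 :: 'a mat" 1 1] by simp
  qed
  have "X * Xi = 1\<^sub>m (Suc k)" unfolding XXi c1 c2 c3 c4 using four_block_one_mat[of k 1] by simp
  then show ?thesis unfolding fprop_def using XG YG Xi Mxy by blast
qed



lemma mult22:
  fixes A :: "'a::field mat"
  assumes A: "A \<in> carrier_mat 2 2" and B: "B \<in> carrier_mat 2 2" and i: "i < 2" and j: "j < 2"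
  shows "(A * B) $$ (i,j) = A $$ (i,0) * B $$ (0,j) + A $$ (i,1) * B $$ (1,j)"
proof -
  have "(A * B) $$ (i,j) = row A i \<bullet> col B j" using A B i j by simp
  also have "\<dots> = (\<Sum>l\<in>{0..<2}. row A i $ l * col B j $ l)" unfolding scalar_prod_def using B by simp
  also have "\<dots> = row A i $ 0 * col B j $ 0 + row A i $ 1 * col B j $ 1"
    by (simp add: numeral_2_eq_2)
  also have "\<dots> = A $$ (i,0) * B $$ (0,j) + A $$ (i,1) * B $$ (1,j)" using A B i j by simp
  finally show ?thesis .
qed

lemma m22:
  fixes A :: "'a::field mat"
  assumes A: "A \<in> carrier_mat 2 2" and B: "B \<in> carrier_mat 2 2"
  shows "(A * B) $$ (0,0) = A $$ (0,0) * B $$ (0,0) + A $$ (0,1) * B $$ (1,0)"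
    "(A * B) $$ (0,1) = A $$ (0,0) * B $$ (0,1) + A $$ (0,1) * B $$ (1,1)"
    "(A * B) $$ (1,0) = A $$ (1,0) * B $$ (0,0) + A $$ (1,1) * B $$ (1,0)"
    "(A * B) $$ (1,1) = A $$ (1,0) * B $$ (0,1) + A $$ (1,1) * B $$ (1,1)"
  by (rule mult22[OF A B]; simp)+

lemma less2: "(i::nat) < 2 \<Longrightarrow> i = 0 \<or> i = 1" by auto

lemma base_direct:
  fixes M :: "'a::field mat"
  assumes w: "w 0 \<noteq> w 1" and M: "M \<in> carrier_mat 2 2" and b: "M $$ (0,1) \<noteq> 0" and c: "M $$ (1,0) \<noteq> 0"
  shows "fprop w 2 M"
proof -
  define d where "d = w 0 - w 1"
  have d: "d \<noteq> 0" using w unfolding d_def by simp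
  define y where "y = M $$ (1,0) / d"
  define x where "x = - M $$ (0,1) / d"
  have x: "x \<noteq> 0" and y: "y \<noteq> 0" using b c d unfolding x_def y_def by auto
  define X where "X = mat 2 2 (\<lambda>(i,j). if i = 0 \<and> j = 1 then x else if i = 1 \<and> j = 0 then y else (0::'a))"
  define Xi where "Xi = mat 2 2 (\<lambda>(i,j). if i = 0 \<and> j = 1 then 1 / y else if i = 1 \<and> j = 0 then 1 / x else (0::'a))"
  have X: "X \<in> carrier_mat 2 2" and Xi: "Xi \<in> carrier_mat 2 2" unfolding X_def Xi_def by auto
  define Y where "Y = Xi * M"
  have Y: "Y \<in> carrier_mat 2 2" unfolding Y_def using Xi M by simp
  have XXi: "X * Xi = 1\<^sub>m 2"
  proof (rule eq_matI)
    fix i j assume "i < dim_row (1\<^sub>m 2 :: 'a mat)" "j < dim_col (1\<^sub>m 2 :: 'a mat)"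
    then have i: "i < 2" and j: "j < 2" by auto
    show "(X * Xi) $$ (i,j) = (1\<^sub>m 2 :: 'a mat) $$ (i,j)"
      unfolding mult22[OF X Xi i j] using less2[OF i] less2[OF j] x y by (auto simp: X_def Xi_def)
  qed (use X Xi in auto)
  have MXY: "M = X * Y" unfolding Y_def using inv_cancel[OF X Xi XXi M] by simp
  have gX: "gdiag w 2 X" unfolding gdiag_def using X by (auto simp: X_def dest!: less2)
  have Y00: "Y $$ (0,0) = d"
  proof -
    have "Y $$ (0,0) = Xi $$ (0,0) * M $$ (0,0) + Xi $$ (0,1) * M $$ (1,0)"
      unfolding Y_def by (rule mult22[OF Xi M]) auto
    then show ?thesis using y d by (simp add: Xi_def y_def)
  qed
  have Y11: "Y $$ (1,1) = - d"
  proof -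
    have "Y $$ (1,1) = Xi $$ (1,0) * M $$ (0,1) + Xi $$ (1,1) * M $$ (1,1)"
      unfolding Y_def by (rule mult22[OF Xi M]) auto
    then show ?thesis using x d b by (simp add: Xi_def x_def)
  qed
  have gY: "gdiag w 2 Y" unfolding gdiag_def using Y Y00 Y11 by (auto simp: d_def sw_def dest!: less2)
  show ?thesis unfolding fprop_def
    using gdiag_Gset[OF gX] gdiag_Gset[OF gY] Xi XXi MXY by blast
qed

lemma base_half:
  fixes M :: "'a::field mat"
  assumes inf: "infinite (UNIV :: 'a set)" and w: "w 0 \<noteq> w 1" and M: "M \<in> carrier_mat 2 2"
    and b: "M $$ (0,1) \<noteq> 0"
  shows "fprop w 2 M"
proof (cases "M $$ (1,0) = 0")
  case False
  then show ?thesis using base_direct[OF w M b] by simp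
next
  case True
  obtain t :: 'a where t: "t \<notin> {0, (M $$ (0,0) - M $$ (1,1)) / M $$ (0,1)}"
    using ex_new_if_finite[OF inf, of "{0, (M $$ (0,0) - M $$ (1,1)) / M $$ (0,1)}"] by auto
  have t0: "t \<noteq> 0" using t by auto
  have t1: "M $$ (0,0) - M $$ (1,1) - t * M $$ (0,1) \<noteq> 0"
  proof
    assume "M $$ (0,0) - M $$ (1,1) - t * M $$ (0,1) = 0"
    then have "t = (M $$ (0,0) - M $$ (1,1)) / M $$ (0,1)" using b by (simp add: field_simps)
    then show False using t by auto
  qed
  define L where "L = mat 2 2 (\<lambda>(i,j). if i = j then 1 else if i = 1 \<and> j = 0 then t else (0::'a))"
  define Li where "Li = mat 2 2 (\<lambda>(i,j). if i = j then 1 else if i = 1 \<and> j = 0 then - t else (0::'a))"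
  have L: "L \<in> carrier_mat 2 2" and Li: "Li \<in> carrier_mat 2 2" unfolding L_def Li_def by auto
  have LLi: "L * Li = 1\<^sub>m 2"
  proof (rule eq_matI)
    fix i j assume "i < dim_row (1\<^sub>m 2 :: 'a mat)" "j < dim_col (1\<^sub>m 2 :: 'a mat)"
    then have i: "i < 2" and j: "j < 2" by auto
    show "(L * Li) $$ (i,j) = (1\<^sub>m 2 :: 'a mat) $$ (i,j)"
      unfolding mult22[OF L Li i j] using less2[OF i] less2[OF j] by (auto simp: L_def Li_def)
  qed (use L Li in auto)
  have LiL: "Li * L = 1\<^sub>m 2"
  proof (rule eq_matI)
    fix i j assume "i < dim_row (1\<^sub>m 2 :: 'a mat)" "j < dim_col (1\<^sub>m 2 :: 'a mat)"
    then have i: "i < 2" and j: "j < 2" by auto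
    show "(Li * L) $$ (i,j) = (1\<^sub>m 2 :: 'a mat) $$ (i,j)"
      unfolding mult22[OF Li L i j] using less2[OF i] less2[OF j] by (auto simp: L_def Li_def)
  qed (use L Li in auto)
  define LM where "LM = L * M"
  have LM: "LM \<in> carrier_mat 2 2" unfolding LM_def using L M by simp
  have LM01: "LM $$ (0,1) = M $$ (0,1)"
    unfolding LM_def m22[OF L M] by (auto simp: L_def)
  have LM10: "LM $$ (1,0) = t * M $$ (0,0) + M $$ (1,0)"
    unfolding LM_def m22[OF L M] by (auto simp: L_def)
  have LM11: "LM $$ (1,1) = t * M $$ (0,1) + M $$ (1,1)"
    unfolding LM_def m22[OF L M] by (auto simp: L_def)
  define M' where "M' = LM * Li"
  have M': "M' \<in> carrier_mat 2 2" unfolding M'_def using LM Li by simp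
  have M'01: "M' $$ (0,1) = M $$ (0,1)"
    unfolding M'_def m22[OF LM Li] using LM01 by (auto simp: Li_def)
  have M'10: "M' $$ (1,0) = t * (M $$ (0,0) - M $$ (1,1) - t * M $$ (0,1))"
    unfolding M'_def m22[OF LM Li] using LM10 LM11 True by (auto simp: Li_def algebra_simps)
  have "fprop w 2 M'" by (rule base_direct[OF w M']) (use M'01 M'10 b t0 t1 in auto)
  then have "fprop w 2 (L * M * Li)" unfolding M'_def LM_def .
  then show ?thesis by (rule conj_reduce[OF M L Li LLi LiL])
qed

lemma base2:
  fixes M :: "'a::field mat"
  assumes inf: "infinite (UNIV :: 'a set)" and w: "w 0 \<noteq> w 1" and M: "M \<in> carrier_mat 2 2"
  shows "fprop w 2 M"
proof (cases "M $$ (0,1) = 0")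
  case False
  then show ?thesis using base_half[OF inf w M] by simp
next
  case b0: True
  show ?thesis
  proof (cases "M $$ (1,0) = 0")
    case True
    show ?thesis
    proof (rule diag_case[OF _ M])
      fix i j :: nat assume "i < 2" "j < 2" "i \<noteq> j"
      then show "M $$ (i,j) = 0" using b0 True by (auto dest!: less2)
    qed simp
  next
    case False
    have s: "invol 2 sw" unfolding invol_def sw_def by auto
    define P where "P = (perm_mat 2 sw :: 'a mat)"
    have P: "P \<in> carrier_mat 2 2" unfolding P_def by simp
    have PP: "P * P = 1\<^sub>m 2" unfolding P_def by (rule perm_mat_sq[OF s])
    have PM: "P * M * P \<in> carrier_mat 2 2" using P M by simp
    have "(P * M * P) $$ (0,1) = M $$ (sw 0, sw 1)" unfolding P_def by (rule perm_conj_index[OF s M]) auto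
    then have "(P * M * P) $$ (0,1) \<noteq> 0" using False by (simp add: sw_def)
    then have "fprop w 2 (P * M * P)" using base_half[OF inf w PM] by simp
    then show ?thesis by (rule conj_reduce[OF M P P PP PP])
  qed
qed



lemma step_general:
  fixes M :: "'a::field mat"
  assumes k: "2 \<le> k" and IH: "\<And>N. N \<in> carrier_mat k k \<Longrightarrow> fprop w k N"
    and M: "M \<in> carrier_mat (Suc k) (Suc k)"
  shows "fprop w (Suc k) M"
proof (cases "\<forall>i<Suc k. \<forall>j<Suc k. i \<noteq> j \<longrightarrow> M $$ (i,j) = 0")
  case True
  show ?thesis by (rule diag_case[OF _ M]) (use k True in auto)
next
  case False
  then obtain i j where i: "i < Suc k" and j: "j < Suc k" and ij: "i \<noteq> j" and Mij: "M $$ (i,j) \<noteq> 0"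
    by blast
  define \<tau> where "\<tau> x = (if x = j then k else if x = k then j else x)" for x
  have s: "invol (Suc k) \<tau>" unfolding invol_def \<tau>_def using j by auto
  define P where "P = (perm_mat (Suc k) \<tau> :: 'a mat)"
  have P: "P \<in> carrier_mat (Suc k) (Suc k)" unfolding P_def by simp
  have PP: "P * P = 1\<^sub>m (Suc k)" unfolding P_def by (rule perm_mat_sq[OF s])
  have PM: "P * M * P \<in> carrier_mat (Suc k) (Suc k)" using P M by simp
  have ti: "\<tau> i < k" unfolding \<tau>_def using i j ij by auto
  have "(P * M * P) $$ (\<tau> i, k) = M $$ (\<tau> (\<tau> i), \<tau> k)" unfolding P_def
    by (rule perm_conj_index[OF s M]) (use ti in auto)
  also have "\<tau> (\<tau> i) = i" by (rule invol_inv[OF s i])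
  also have "\<tau> k = j" unfolding \<tau>_def by simp
  finally have nz: "(P * M * P) $$ (\<tau> i, k) \<noteq> 0" using Mij by simp
  have "fprop w (Suc k) (P * M * P)" by (rule main_step[OF k IH PM ti nz])
  then show ?thesis by (rule conj_reduce[OF M P P PP PP])
qed

lemma all_fprop:
  fixes M :: "'a::field mat"
  assumes inf: "infinite (UNIV :: 'a set)" and w: "w 0 \<noteq> w 1" and n: "2 \<le> n"
  shows "M \<in> carrier_mat n n \<Longrightarrow> fprop w n M"
  using n
proof (induction n arbitrary: M rule: nat_induct_at_least)
  case base
  then show ?case using base2[OF inf w] by simp
next
  case (Suc k)
  show ?case by (rule step_general[OF Suc.hyps(1) Suc.IH Suc.prems])
qed

lemma Gset_sub:
  fixes p :: "'a::field poly"
  assumes n: "2 \<le> n" and inj: "inj_on (\<lambda>i. poly p (u i)) {..<n}"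
  shows "Gset (\<lambda>i. poly p (u i)) n \<subseteq> poly_commutators p n"
proof
  fix X assume "X \<in> Gset (\<lambda>i. poly p (u i)) n"
  then obtain P Z R where P: "P \<in> carrier_mat n n" and R: "R \<in> carrier_mat n n"
    and PR: "P * R = 1\<^sub>m n" and RP: "R * P = 1\<^sub>m n" and g: "gdiag (\<lambda>i. poly p (u i)) n Z"
    and Xe: "X = P * Z * R" unfolding Gset_def by blast
  have Z: "Z \<in> carrier_mat n n" using g unfolding gdiag_def by auto
  have "Z \<in> poly_commutators p n"
  proof (cases "\<forall>i<n. Z $$ (i,i) = 0")
    case True
    have s: "invol n id" unfolding invol_def by simp
    show ?thesis by (rule diag_perm_in[OF s Z inj]) (use True in simp)
  next
    case False
    then have d: "\<forall>i<n. Z $$ (i,i) = poly p (u i) - poly p (u (sw i))" using g unfolding gdiag_def by auto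
    have s: "invol n sw" unfolding invol_def sw_def using n by auto
    show ?thesis by (rule diag_perm_in[OF s Z inj]) (use d in simp)
  qed
  then show "X \<in> poly_commutators p n" unfolding Xe by (rule comm_conj[OF _ P R PR RP])
qed

lemma poly_range_infinite:
  fixes p :: "'a::field poly"
  assumes inf: "infinite (UNIV :: 'a set)" and deg: "degree p > 0"
  shows "infinite (range (poly p))"
proof
  assume fin: "finite (range (poly p))"
  have "UNIV = (\<Union>y\<in>range (poly p). {x. poly p x = y})" by auto
  moreover have "finite {x. poly p x = y}" for y
  proof -
    have "p - [:y:] \<noteq> 0" using deg by (auto simp: degree_pCons_eq_if)
    then have "finite {x. poly (p - [:y:]) x = 0}" by (rule poly_roots_finite)
    then show ?thesis by simp
  qed
  ultimately have "finite (UNIV :: 'a set)" using fin by (metis finite_UN_I)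
  then show False using inf by simp
qed

theorem theorem4p2:
  fixes p :: "'a::field poly" and n :: nat
  assumes "infinite (UNIV :: 'a set)"
    and "n > 1"
    and "degree p > 0"
  shows "\<forall>M \<in> carrier_mat n n. \<exists>X Y. X \<in> poly_commutators p n \<and> Y \<in> poly_commutators p n \<and> M = X * Y"
proof
  fix M :: "'a mat" assume M: "M \<in> carrier_mat n n"
  have n: "2 \<le> n" using assms(2) by simp
  obtain f :: "nat \<Rightarrow> 'a" where f: "inj f" and fr: "range f \<subseteq> range (poly p)"
    using infinite_countable_subset[OF poly_range_infinite[OF assms(1) assms(3)]] by blast
  define u where "u i = (SOME x. poly p x = f i)" for i
  have pu: "poly p (u i) = f i" for i
  proof -
    have "f i \<in> range (poly p)" using fr by blast
    then have "\<exists>x. poly p x = f i" by (metis imageE)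
    then show ?thesis unfolding u_def by (rule someI_ex)
  qed
  define w where "w i = poly p (u i)" for i
  have f01: "f 0 \<noteq> f 1" using f by (auto dest: injD)
  have w: "w 0 \<noteq> w 1" unfolding w_def pu using f01 .
  have inj: "inj_on (\<lambda>i. poly p (u i)) {..<n}" unfolding pu using inj_on_subset[OF f subset_UNIV] by simp
  have fp: "fprop w n M" by (rule all_fprop[OF assms(1) w n M])
  then obtain X Y Xi where X: "X \<in> Gset w n" and Y: "Y \<in> Gset w n" and Me: "M = X * Y"
    unfolding fprop_def by blast
  have sub: "Gset w n \<subseteq> poly_commutators p n" unfolding w_def by (rule Gset_sub[OF n inj])
  show "\<exists>X Y. X \<in> poly_commutators p n \<and> Y \<in> poly_commutators p n \<and> M = X * Y"
    using X Y Me sub by blast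
qed


end
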